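(* Let $G_{\mathrm{maj}}$ be the $q$-grammar with master variables $S=\{x,y\}$, rule $x_j\mapsto q^jx_0y_0$, $y_j\mapsto q^jx_0y_0$ ($j\ge0$), and order LPO, and let $D$ be its $q$-derivative. Let $\phi$ be the evaluation with $\phi(x_j)=xq^j$ and $\phi(y_j)=yq^j$ for all $j\ge0$ (into $\mathbb{K}[q,x,y]$, $x,y$ commuting indeterminates). Then for all $n\ge1$, \[ \phi\big(D^n(x_0)\big)=A^{\mathrm{maj}}_n(q;x,y):=\sum_{\sigma\in\mathfrak{S}_n}q^{\operatorname{maj}(\sigma)}x^{\operatorname{asc}(\sigma)}y^{\operatorname{des}(\sigma)}. \]
   Context: Let $\mathbb{K}$ be a commutative ring with unity and characteristic zero, $q$ an indeterminate. For a set $S$ of master variables, $\mathbb{S}=\{s_i:s\in S,\ i\in\{0,1,2,\dots\}\}$ is a set of non-commuting variables, $F(\mathbb{S})$ the free group on $\mathbb{S}$ and $\mathbb{E}=\mathbb{K}[q][F(\mathbb{S})]$ its group algebra (finite $\mathbb{K}[q]$-combinations of reduced words in letters from $\mathbb{S}\cup\mathbb{S}^{-1}$). A rule $R$ assigns to each $s_i$ an element $R(s_i)\in\mathbb{E}$, extended by $R(s_i^{-1})=-s_i^{-1}R(s_i)s_{i+1}^{-1}$. The up-arrow $\uparrow$ is the linear map replacing each letter $s_i^{\pm1}$ of a word by $s_{i+1}^{\pm1}$. An order rewrites each word by permuting its letters (extended linearly); LPO stably reorders the letters of a word according to the position of their underlying variable in the sequence $x_0,x_1,x_2,\dots,y_0,y_1,y_2,\dots$.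 A $q$-grammar is a triple $(S,R,\rho)$; its $q$-derivative is the $\mathbb{K}[q]$-linear map $D$ with $D(w_1\cdots w_n)=\sum_{j=1}^n\rho\big(w_1\cdots w_{j-1}R(w_j)\uparrow(w_{j+1}\cdots w_n)\big)$ for letters $w_j\in\mathbb{S}\cup\mathbb{S}^{-1}$, and $D^k=D\circ D^{k-1}$, $D^0=\mathrm{id}$. An evaluation $\phi$ sends each $s_i$ to an element of a commutative ring containing $\mathbb{K}[q]$ and is extended to a $\mathbb{K}[q]$-linear ring morphism on $\mathbb{E}$ with $\phi(s_i^{-1})=\phi(s_i)^{-1}$. For $\sigma\in\mathfrak{S}_n$ with the convention $\sigma_0=\sigma_{n+1}=0$, an index $0\le i\le n$ is a descent if $\sigma_i>\sigma_{i+1}$ and an ascent otherwise; $\operatorname{des},\operatorname{asc}$ count them. $\operatorname{maj}(\sigma)=\sum_{1\le i\le n-1,\ \sigma_i>\sigma_{i+1}}i$ is the usual major index. *)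

theory Defs
  imports "HOL-Computational_Algebra.Polynomial" "HOL-Library.Poly_Mapping"
    "HOL-Library.Product_Plus" "HOL-Library.Product_Lexorder"
    "HOL-Combinatorics.Permutations"
begin

datatype mvar = X | Y

text \<open>A letter (v,i,True) is v_i, a letter (v,i,False) is v_i^{-1}.\<close>
type_synonym letter = "mvar \<times> nat \<times> bool"
type_synonym word = "letter list"

definition inverse_letters :: "letter \<Rightarrow> letter \<Rightarrow> bool" where
  "inverse_letters a b \<longleftrightarrow> fst a = fst b \<and> fst (snd a) = fst (snd b) \<and> snd (snd a) \<noteq> snd (snd b)"

fun red_push :: "letter \<Rightarrow> word \<Rightarrow> word" where
  "red_push a [] = [a]"
| "red_push a (b # w) = (if inverse_letters a b then w else a # b # w)"

definition fred :: "word \<Rightarrow> word" where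
  "fred w = foldr red_push w []"

text \<open>Elements of E: finitely supported K[q]-combinations of (reduced) words.\<close>
type_synonym 'k E = "word \<Rightarrow>\<^sub>0 'k poly"

definition emon :: "word \<Rightarrow> 'k::comm_ring_1 E" where
  "emon w = Poly_Mapping.single (fred w) 1"

definition escale :: "'k::comm_ring_1 poly \<Rightarrow> 'k E \<Rightarrow> 'k E" where
  "escale c f = Poly_Mapping.map (\<lambda>a. c * a) f"

definition emul :: "'k::comm_ring_1 E \<Rightarrow> 'k E \<Rightarrow> 'k E" where
  "emul f g = (\<Sum>u\<in>Poly_Mapping.keys f. \<Sum>v\<in>Poly_Mapping.keys g.
                  Poly_Mapping.single (fred (u @ v)) (Poly_Mapping.lookup f u * Poly_Mapping.lookup g v))"

definition elin :: "(word \<Rightarrow> 'k::comm_ring_1 E) \<Rightarrow> 'k E \<Rightarrow> 'k E" where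
  "elin F f = (\<Sum>w\<in>Poly_Mapping.keys f. escale (Poly_Mapping.lookup f w) (F w))"

definition up_word :: "word \<Rightarrow> word" where
  "up_word w = map (\<lambda>(v, i, b). (v, Suc i, b)) w"

definition up :: "'k::comm_ring_1 E \<Rightarrow> 'k E" where
  "up = elin (\<lambda>w. emon (up_word w))"

definition rule_letter :: "(mvar \<Rightarrow> nat \<Rightarrow> 'k::comm_ring_1 E) \<Rightarrow> letter \<Rightarrow> 'k E" where
  "rule_letter R a = (case a of (s, i, b) \<Rightarrow>
     if b then R s i
     else - emul (emul (emon [(s, i, False)]) (R s i)) (emon [(s, Suc i, False)]))"

definition order_ext :: "(word \<Rightarrow> word) \<Rightarrow> 'k::comm_ring_1 E \<Rightarrow> 'k E" where
  "order_ext \<rho> = elin (\<lambda>w. emon (\<rho> w))"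

definition qder_word :: "(mvar \<Rightarrow> nat \<Rightarrow> 'k::comm_ring_1 E) \<Rightarrow> (word \<Rightarrow> word) \<Rightarrow> word \<Rightarrow> 'k E" where
  "qder_word R \<rho> w = (\<Sum>j<length w.
      order_ext \<rho> (emul (emul (emon (take j w)) (rule_letter R (w ! j)))
                        (up (emon (drop (Suc j) w)))))"

definition qder :: "(mvar \<Rightarrow> nat \<Rightarrow> 'k::comm_ring_1 E) \<Rightarrow> (word \<Rightarrow> word) \<Rightarrow> 'k E \<Rightarrow> 'k E" where
  "qder R \<rho> = elin (qder_word R \<rho>)"

definition R_maj :: "mvar \<Rightarrow> nat \<Rightarrow> 'k::comm_ring_1 E" where
  "R_maj s j = Poly_Mapping.single (fred [(X, 0, True), (Y, 0, True)]) (monom 1 j)"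

definition lpo_key :: "letter \<Rightarrow> nat \<times> nat" where
  "lpo_key a = (case a of (s, i, b) \<Rightarrow> (if s = X then 0 else 1, i))"

definition LPO :: "word \<Rightarrow> word" where
  "LPO w = sort_key lpo_key w"

definition D_maj :: "'k::comm_ring_1 E \<Rightarrow> 'k E" where
  "D_maj = qder R_maj LPO"

text \<open>Target ring: Laurent polynomials K[q^{\<pm>1}, x^{\<pm>1}, y^{\<pm>1}], as the monoid
  algebra of Z^3 over K (exponents of (q, x, y)); it contains K[q,x,y] and
  the images of all s_i are invertible there.\<close>
type_synonym 'k L = "(int \<times> int \<times> int) \<Rightarrow>\<^sub>0 'k"

definition lmono :: "int \<Rightarrow> int \<Rightarrow> int \<Rightarrow> 'k::comm_ring_1 L" where
  "lmono a b c = Poly_Mapping.single (a, b, c) 1"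

definition qemb :: "'k::comm_ring_1 poly \<Rightarrow> 'k L" where
  "qemb p = (\<Sum>i\<le>degree p. Poly_Mapping.single (int i, 0, 0) (coeff p i))"

definition phi_letter :: "letter \<Rightarrow> 'k::comm_ring_1 L" where
  "phi_letter a = (case a of (s, j, b) \<Rightarrow>
     (if b then (if s = X then lmono (int j) 1 0 else lmono (int j) 0 1)
      else (if s = X then lmono (- int j) (-1) 0 else lmono (- int j) 0 (-1))))"

definition phi_word :: "word \<Rightarrow> 'k::comm_ring_1 L" where
  "phi_word w = prod_list (map phi_letter w)"

definition phi :: "'k::comm_ring_1 E \<Rightarrow> 'k L" where
  "phi f = (\<Sum>w\<in>Poly_Mapping.keys f. qemb (Poly_Mapping.lookup f w) * phi_word w)"

definition sext :: "nat \<Rightarrow> (nat \<Rightarrow> nat) \<Rightarrow> nat \<Rightarrow> nat" where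
  "sext n \<sigma> i = (if 1 \<le> i \<and> i \<le> n then \<sigma> i else 0)"

definition des :: "nat \<Rightarrow> (nat \<Rightarrow> nat) \<Rightarrow> nat" where
  "des n \<sigma> = card {i \<in> {0..n}. sext n \<sigma> i > sext n \<sigma> (Suc i)}"

definition asc :: "nat \<Rightarrow> (nat \<Rightarrow> nat) \<Rightarrow> nat" where
  "asc n \<sigma> = card {i \<in> {0..n}. \<not> (sext n \<sigma> i > sext n \<sigma> (Suc i))}"

definition maj :: "nat \<Rightarrow> (nat \<Rightarrow> nat) \<Rightarrow> nat" where
  "maj n \<sigma> = (\<Sum>i \<in> {i. 1 \<le> i \<and> i \<le> n - 1 \<and> \<sigma> i > \<sigma> (Suc i)}. i)"

definition A_maj :: "nat \<Rightarrow> 'k::comm_ring_1 L" where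
  "A_maj n = (\<Sum>\<sigma> \<in> {\<sigma>. \<sigma> permutes {1..n}}.
                lmono (int (maj n \<sigma>)) (int (asc n \<sigma>)) (int (des n \<sigma>)))"

end

theory Submission
  imports Defs "HOL-Combinatorics.Multiset_Permutations"
begin


lemma lmono_mult: "(lmono a b c :: 'k::comm_ring_1 L) * lmono a' b' c' = lmono (a+a') (b+b') (c+c')"
  by (simp add: lmono_def mult_single)

lemma rank_inj_lt:
  assumes "finite A"
  shows "inj_on (\<lambda>i. card {j\<in>A. j<i}) (A::nat set)"
proof (rule inj_onI)
  fix x y assume xy: "x \<in> A" "y \<in> A" "card {j\<in>A. j<x} = card {j\<in>A. j<y}"
  show "x = y"
  proof (rule ccontr)
    assume "x \<noteq> y"
    then consider "x < y" | "y < x" by linarith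
    then show False
    proof cases
      case 1
      have "{j\<in>A. j<x} \<subset> {j\<in>A. j<y}" using 1 xy by auto
      then have "card {j\<in>A. j<x} < card {j\<in>A. j<y}" using assms by (intro psubset_card_mono) auto
      then show False using xy by simp
    next
      case 2
      have "{j\<in>A. j<y} \<subset> {j\<in>A. j<x}" using 2 xy by auto
      then have "card {j\<in>A. j<y} < card {j\<in>A. j<x}" using assms by (intro psubset_card_mono) auto
      then show False using xy by simp
    qed
  qed
qed

lemma rank_inj_gt:
  assumes "finite A"
  shows "inj_on (\<lambda>i. card {j\<in>A. i<j}) (A::nat set)"
proof (rule inj_onI)
  fix x y assume xy: "x \<in> A" "y \<in> A" "card {j\<in>A. x<j} = card {j\<in>A. y<j}"
  show "x = y"
  proof (rule ccontr)
    assume "x \<noteq> y"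
    then consider "x < y" | "y < x" by linarith
    then show False
    proof cases
      case 1
      have "{j\<in>A. y<j} \<subset> {j\<in>A. x<j}" using 1 xy by auto
      then have "card {j\<in>A. y<j} < card {j\<in>A. x<j}" using assms by (intro psubset_card_mono) auto
      then show False using xy by simp
    next
      case 2
      have "{j\<in>A. x<j} \<subset> {j\<in>A. y<j}" using 2 xy by auto
      then have "card {j\<in>A. x<j} < card {j\<in>A. y<j}" using assms by (intro psubset_card_mono) auto
      then show False using xy by simp
    qed
  qed
qed

lemma bij_from_inj:
  assumes "finite A" "inj_on f A" "\<And>x. x \<in> A \<Longrightarrow> f x < card A"
  shows "bij_betw f A {..<card A}"
proof -
  have "f ` A \<subseteq> {..<card A}" using assms(3) by auto
  moreover have "card (f ` A) = card {..<card A}" using assms(2) by (simp add: card_image)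
  ultimately have "f ` A = {..<card A}" by (intro card_subset_eq) auto
  then show ?thesis using assms(2) by (simp add: bij_betw_def)
qed

lemma rank_bij_lt:
  assumes "finite A"
  shows "bij_betw (\<lambda>i. card {j\<in>A. j<i}) (A::nat set) {..<card A}"
proof (rule bij_from_inj[OF assms rank_inj_lt[OF assms]])
  fix x assume "x \<in> A"
  then have "{j\<in>A. j<x} \<subset> A" by auto
  then show "card {j\<in>A. j<x} < card A" using assms by (intro psubset_card_mono) auto
qed

lemma rank_bij_gt:
  assumes "finite A"
  shows "bij_betw (\<lambda>i. card {j\<in>A. i<j}) (A::nat set) {..<card A}"
proof (rule bij_from_inj[OF assms rank_inj_gt[OF assms]])
  fix x assume "x \<in> A"
  then have "{j\<in>A. x<j} \<subset> A" by auto
  then show "card {j\<in>A. x<j} < card A" using assms by (intro psubset_card_mono) auto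
qed

definition pv :: "nat list \<Rightarrow> nat \<Rightarrow> nat" where
  "pv xs j = (if 1 \<le> j \<and> j \<le> length xs then xs ! (j - 1) else 0)"

definition Dl :: "nat list \<Rightarrow> nat set" where
  "Dl xs = {i \<in> {0..length xs}. pv xs (Suc i) < pv xs i}"

definition majL :: "nat list \<Rightarrow> nat" where
  "majL xs = (\<Sum>i \<in> {i \<in> Dl xs. 1 \<le> i \<and> i \<le> length xs - 1}. i)"

definition ascL :: "nat list \<Rightarrow> nat" where
  "ascL xs = card {i \<in> {0..length xs}. \<not> pv xs (Suc i) < pv xs i}"

definition LL :: "nat list \<Rightarrow> 'k::comm_ring_1 L" where
  "LL xs = lmono (int (majL xs)) (int (ascL xs)) (int (card (Dl xs)))"

definition insL :: "nat list \<Rightarrow> nat \<Rightarrow> nat \<Rightarrow> nat list" where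
  "insL xs i N = take i xs @ N # drop i xs"

definition TkN :: "int \<Rightarrow> nat \<Rightarrow> nat \<Rightarrow> 'k::comm_ring_1 L" where
  "TkN e a b = (\<Sum>k<a. lmono (e + int b + int k) (int a) (int b + 1))
             + (\<Sum>k<b. lmono (e + int k) (int a + 1) (int b))"

lemma finite_Dl [simp]: "finite (Dl xs)"
  by (simp add: Dl_def)

lemma Dl_sub: "Dl xs \<subseteq> {..length xs}"
  by (auto simp: Dl_def)

lemma pv_ins:
  assumes "i \<le> length xs"
  shows "pv (insL xs i N) j = (if j \<le> i then pv xs j else if j = Suc i then N else pv xs (j - 1))"
  using assms
  by (auto simp: pv_def insL_def nth_append min_def nth_Cons' nth_take nth_drop numeral_2_eq_2 split: if_splits)

lemma ascL_card: "ascL xs + card (Dl xs) = Suc (length xs)"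
proof -
  have "{i \<in> {0..length xs}. \<not> pv xs (Suc i) < pv xs i} = {0..length xs} - Dl xs"
    by (auto simp: Dl_def)
  then have "ascL xs = card ({0..length xs} - Dl xs)" by (simp add: ascL_def)
  also have "\<dots> = Suc (length xs) - card (Dl xs)"
    using Dl_sub[of xs] by (subst card_Diff_subset) (auto simp: atLeast0AtMost)
  finally show ?thesis using Dl_sub[of xs] card_mono[of "{..length xs}" "Dl xs"] by simp
qed

lemma maj_Dl:
  assumes "\<forall>x\<in>set xs. 0 < x"
  shows "majL xs + length xs = \<Sum>(Dl xs)"
proof (cases "xs = []")
  case True
  then show ?thesis by (simp add: majL_def Dl_def pv_def)
next
  case False
  have n: "length xs \<in> Dl xs"
    using False assms by (auto simp: Dl_def pv_def last_conv_nth[symmetric] Suc_le_eq)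
  have z: "0 \<notin> Dl xs" by (simp add: Dl_def pv_def)
  have "Dl xs = insert (length xs) {i \<in> Dl xs. 1 \<le> i \<and> i \<le> length xs - 1}"
    using n z Dl_sub[of xs] by auto (metis Suc_leI le_diff_conv2 le_neq_implies_less leI less_one not_less_eq_eq One_nat_def)
  then have "\<Sum>(Dl xs) = length xs + \<Sum>{i \<in> Dl xs. 1 \<le> i \<and> i \<le> length xs - 1}"
    by (metis (no_types, lifting) False Diff_insert_absorb add_diff_cancel_left' diff_less finite_Dl
       finite_insert insertCI length_greater_0_conv mem_Collect_eq not_le sum.insert sum.remove zero_less_one)
  then show ?thesis by (simp add: majL_def)
qed

lemma length_insL [simp]: "length (insL xs i N) = Suc (length xs)"
  by (simp add: insL_def)

lemma set_insL [simp]: "set (insL xs i N) = insert N (set xs)"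
proof -
  have "set xs = set (take i xs) \<union> set (drop i xs)"
    by (metis append_take_drop_id set_append)
  then show ?thesis by (auto simp: insL_def)
qed

lemma Dl_ins:
  assumes i: "i \<le> length xs" and pos: "\<forall>x\<in>set xs. 0 < x \<and> x < N" and N: "0 < N"
  shows "Dl (insL xs i N) = {j\<in>Dl xs. j<i} \<union> {Suc i} \<union> Suc ` {j\<in>Dl xs. i<j}"
proof -
  have pvN: "pv xs j < N" for j
  proof (cases "1 \<le> j \<and> j \<le> length xs")
    case True
    then have "xs ! (j - 1) \<in> set xs" by (intro nth_mem) linarith
    then show ?thesis using True pos by (simp add: pv_def)
  qed (use N in \<open>auto simp: pv_def\<close>)
  show ?thesis
  proof (rule set_eqI)
    fix x
    consider "x < i" | "x = i" | "x = Suc i" | "Suc i < x" by linarith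
    then show "x \<in> Dl (insL xs i N) \<longleftrightarrow> x \<in> {j\<in>Dl xs. j<i} \<union> {Suc i} \<union> Suc ` {j\<in>Dl xs. i<j}"
    proof cases
      case 1
      then show ?thesis using i by (auto simp: Dl_def pv_ins)
    next
      case 2
      then show ?thesis using i pvN[of i] by (auto simp: Dl_def pv_ins)
    next
      case 3
      then show ?thesis using i pvN[of "Suc i"] by (auto simp: Dl_def pv_ins)
    next
      case 4
      then obtain y where y: "x = Suc y" "i < y" by (metis Suc_lessE)
      then show ?thesis using i by (auto simp: Dl_def pv_ins)
    qed
  qed
qed

lemma slot_sum:
  assumes pos: "\<forall>x\<in>set xs. 0 < x \<and> x < N" and N: "0 < N"
  shows "(\<Sum>i\<le>length xs. (LL (insL xs i N) :: 'k::comm_ring_1 L))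
         = TkN (int (majL xs)) (ascL xs) (card (Dl xs))"
proof -
  define n where "n = length xs"
  define D where "D = Dl xs"
  define c where "c i = card {j\<in>D. i<j}" for i
  define A where "A = {..n} - D"
  define e where "e i = card {j\<in>A. j<i}" for i
  have finD: "finite D" by (simp add: D_def)
  have Dsub: "D \<subseteq> {..n}" using Dl_sub by (simp add: D_def n_def)
  have ascD: "ascL xs + card D = Suc n" using ascL_card by (simp add: D_def n_def)
  have majD: "majL xs + n = \<Sum>D" using maj_Dl pos by (simp add: D_def n_def)
  have cardA: "card A = ascL xs"
    using ascD Dsub finD by (simp add: A_def card_Diff_subset)
  have posI: "\<forall>x\<in>set (insL xs i N). 0 < x" for i using pos N by auto
  have splitD: "D = {j\<in>D. j<i} \<union> (D \<inter> {i}) \<union> {j\<in>D. i<j}" for i by auto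
  have cardD: "card D = card {j\<in>D. j<i} + card (D \<inter> {i}) + c i" for i
  proof -
    have "card D = card ({j\<in>D. j<i} \<union> (D \<inter> {i}) \<union> {j\<in>D. i<j})" using splitD[of i] by simp
    also have "\<dots> = card {j\<in>D. j<i} + card (D \<inter> {i}) + card {j\<in>D. i<j}"
      using finD by (subst card_Un_disjoint; auto simp: card_Un_disjoint)+
    finally show ?thesis by (simp add: c_def)
  qed
  have sumD: "\<Sum>D = \<Sum>{j\<in>D. j<i} + \<Sum>(D \<inter> {i}) + \<Sum>{j\<in>D. i<j}" for i
  proof -
    have "\<Sum>D = \<Sum>({j\<in>D. j<i} \<union> (D \<inter> {i}) \<union> {j\<in>D. i<j})" using splitD[of i] by simp
    also have "\<dots> = \<Sum>{j\<in>D. j<i} + \<Sum>(D \<inter> {i}) + \<Sum>{j\<in>D. i<j}"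
      using finD by (subst sum.union_disjoint; auto simp: sum.union_disjoint)+
    finally show ?thesis .
  qed
  have D'card: "card (Dl (insL xs i N)) = card {j\<in>D. j<i} + 1 + c i" if "i \<le> n" for i
  proof -
    have "Dl (insL xs i N) = {j\<in>D. j<i} \<union> {Suc i} \<union> Suc ` {j\<in>D. i<j}"
      using Dl_ins[of i xs N] that pos N by (simp add: D_def n_def)
    also have "card \<dots> = card {j\<in>D. j<i} + 1 + card (Suc ` {j\<in>D. i<j})"
      using finD by (subst card_Un_disjoint; auto simp: card_Un_disjoint)+
    finally show ?thesis by (simp add: c_def card_image)
  qed
  have D'sum: "\<Sum>(Dl (insL xs i N)) = \<Sum>{j\<in>D. j<i} + Suc i + \<Sum>{j\<in>D. i<j} + c i" if "i \<le> n" for i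
  proof -
    have "Dl (insL xs i N) = {j\<in>D. j<i} \<union> {Suc i} \<union> Suc ` {j\<in>D. i<j}"
      using Dl_ins[of i xs N] that pos N by (simp add: D_def n_def)
    also have "\<Sum>\<dots> = \<Sum>{j\<in>D. j<i} + Suc i + \<Sum>(Suc ` {j\<in>D. i<j})"
      using finD by (subst sum.union_disjoint; auto simp: sum.union_disjoint)+
    also have "\<Sum>(Suc ` {j\<in>D. i<j}) = \<Sum>{j\<in>D. i<j} + c i"
      using sum_Suc[of "\<lambda>x. x" "{j\<in>D. i<j}"] by (simp add: sum.reindex c_def)
    finally show ?thesis by simp
  qed
  have caseD: "LL (insL xs i N) = (lmono (int (majL xs) + int (c i)) (int (ascL xs) + 1) (int (card D)) :: 'k L)"
    if "i \<in> D" for i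
  proof -
    have i: "i \<le> n" using that Dsub by auto
    have m: "majL (insL xs i N) + Suc n = \<Sum>(Dl (insL xs i N))" using maj_Dl[OF posI[of i]] by (simp add: n_def)
    have a: "ascL (insL xs i N) + card (Dl (insL xs i N)) = Suc (Suc n)" using ascL_card[of "insL xs i N"] by (simp add: n_def)
    have "majL (insL xs i N) = majL xs + c i"
      using m D'sum[OF i] sumD[of i] majD that by simp
    moreover have "card (Dl (insL xs i N)) = card D" using D'card[OF i] cardD[of i] that by simp
    moreover have "ascL (insL xs i N) = ascL xs + 1" using a ascD D'card[OF i] cardD[of i] that by simp
    ultimately show ?thesis by (simp add: LL_def add.commute)
  qed
  have caseA: "LL (insL xs i N) = (lmono (int (majL xs) + int (card D) + int (e i)) (int (ascL xs)) (int (card D) + 1) :: 'k L)"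
    if "i \<in> A" for i
  proof -
    have i: "i \<le> n" "i \<notin> D" using that by (auto simp: A_def)
    have m: "majL (insL xs i N) + Suc n = \<Sum>(Dl (insL xs i N))" using maj_Dl[OF posI[of i]] by (simp add: n_def)
    have a: "ascL (insL xs i N) + card (Dl (insL xs i N)) = Suc (Suc n)" using ascL_card[of "insL xs i N"] by (simp add: n_def)
    have li: "{..<i} = {j\<in>D. j<i} \<union> {j\<in>A. j<i}" using i by (auto simp: A_def)
    have "i = card {j\<in>D. j<i} + e i"
    proof -
      have "i = card {..<i}" by simp
      also have "\<dots> = card {j\<in>D. j<i} + card {j\<in>A. j<i}"
        by (subst li, rule card_Un_disjoint) (auto simp: A_def)
      finally show ?thesis by (simp add: e_def)
    qed
    then have ic: "i + c i = card D + e i" using cardD[of i] i by simp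
    have "majL (insL xs i N) = majL xs + card D + e i"
      using m D'sum[OF i(1)] sumD[of i] majD i ic by simp
    moreover have "card (Dl (insL xs i N)) = card D + 1" using D'card[OF i(1)] cardD[of i] i by simp
    moreover have "ascL (insL xs i N) = ascL xs" using a ascD D'card[OF i(1)] cardD[of i] i by simp
    ultimately show ?thesis by (simp add: LL_def add.commute)
  qed
  have "(\<Sum>i\<le>n. (LL (insL xs i N) :: 'k L)) = (\<Sum>i\<in>D. LL (insL xs i N)) + (\<Sum>i\<in>A. LL (insL xs i N))"
    using Dsub by (simp add: A_def sum.subset_diff[of D "{..n}"] add.commute)
  also have "(\<Sum>i\<in>D. LL (insL xs i N)) = (\<Sum>i\<in>D. (lmono (int (majL xs) + int (c i)) (int (ascL xs) + 1) (int (card D)) :: 'k L))"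
    by (rule sum.cong) (auto simp: caseD)
  also have "\<dots> = (\<Sum>k<card D. lmono (int (majL xs) + int k) (int (ascL xs) + 1) (int (card D)))"
    using sum.reindex_bij_betw[OF rank_bij_gt[OF finD], of "\<lambda>k. (lmono (int (majL xs) + int k) (int (ascL xs) + 1) (int (card D)) :: 'k L)"]
    by (simp add: c_def)
  also have "(\<Sum>i\<in>A. LL (insL xs i N)) = (\<Sum>i\<in>A. (lmono (int (majL xs) + int (card D) + int (e i)) (int (ascL xs)) (int (card D) + 1) :: 'k L))"
    by (rule sum.cong) (auto simp: caseA)
  also have "\<dots> = (\<Sum>k<card A. lmono (int (majL xs) + int (card D) + int k) (int (ascL xs)) (int (card D) + 1))"
    using sum.reindex_bij_betw[OF rank_bij_lt[of A], of "\<lambda>k. (lmono (int (majL xs) + int (card D) + int k) (int (ascL xs)) (int (card D) + 1) :: 'k L)"]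
    by (simp add: e_def A_def)
  finally show ?thesis by (simp add: TkN_def cardA D_def n_def add.commute)
qed



declare upt_Suc [simp del]

lemma pv_map:
  "pv (map \<sigma> [1..<Suc n]) j = sext n \<sigma> j"
  by (auto simp: pv_def sext_def nth_map_upt)

lemma stats_list:
  "(lmono (int (maj n \<sigma>)) (int (asc n \<sigma>)) (int (des n \<sigma>)) :: 'k::comm_ring_1 L) = LL (map \<sigma> [1..<Suc n])"
proof -
  let ?xs = "map \<sigma> [1..<Suc n]"
  have d: "Dl ?xs = {i \<in> {0..n}. sext n \<sigma> i > sext n \<sigma> (Suc i)}"
    unfolding Dl_def pv_map by simp
  have a: "ascL ?xs = asc n \<sigma>" unfolding ascL_def asc_def pv_map by simp
  have m: "majL ?xs = maj n \<sigma>"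
  proof -
    have "{i \<in> Dl ?xs. 1 \<le> i \<and> i \<le> length ?xs - 1} = {i. 1 \<le> i \<and> i \<le> n - 1 \<and> \<sigma> i > \<sigma> (Suc i)}"
      unfolding d by (auto simp: sext_def)
    then show ?thesis by (simp add: majL_def maj_def)
  qed
  show ?thesis unfolding LL_def d a m des_def ..
qed

lemma perm_list_bij:
  "bij_betw (\<lambda>\<sigma>. map \<sigma> [1..<Suc n]) {\<sigma>. \<sigma> permutes {1..n}} (permutations_of_set {1..n})"
proof (rule bij_betw_imageI)
  show "inj_on (\<lambda>\<sigma>. map \<sigma> [1..<Suc n]) {\<sigma>. \<sigma> permutes {1..n}}"
  proof (rule inj_onI)
    fix \<sigma> \<tau> assume s: "\<sigma> \<in> {\<sigma>. \<sigma> permutes {1..n}}" "\<tau> \<in> {\<sigma>. \<sigma> permutes {1..n}}"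
      and eq: "map \<sigma> [1..<Suc n] = map \<tau> [1..<Suc n]"
    show "\<sigma> = \<tau>"
    proof
      fix x show "\<sigma> x = \<tau> x"
      proof (cases "x \<in> {1..n}")
        case True
        then show ?thesis using eq by (auto simp: map_eq_conv)
      next
        case False
        then show ?thesis using s by (simp add: permutes_not_in)
      qed
    qed
  qed
  show "(\<lambda>\<sigma>. map \<sigma> [1..<Suc n]) ` {\<sigma>. \<sigma> permutes {1..n}} = permutations_of_set {1..n}"
  proof
    show "(\<lambda>\<sigma>. map \<sigma> [1..<Suc n]) ` {\<sigma>. \<sigma> permutes {1..n}} \<subseteq> permutations_of_set {1..n}"
    proof clarify
      fix \<sigma> assume s: "\<sigma> permutes {1..n}"
      have "set (map \<sigma> [1..<Suc n]) = \<sigma> ` {1..n}" by auto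
      also have "\<dots> = {1..n}" using s by (simp add: permutes_image)
      finally have "set (map \<sigma> [1..<Suc n]) = {1..n}" .
      moreover have "distinct (map \<sigma> [1..<Suc n])"
        using s by (simp add: distinct_map permutes_inj_on)
      ultimately show "map \<sigma> [1..<Suc n] \<in> permutations_of_set {1..n}" by (simp add: permutations_of_set_def)
    qed
    show "permutations_of_set {1..n} \<subseteq> (\<lambda>\<sigma>. map \<sigma> [1..<Suc n]) ` {\<sigma>. \<sigma> permutes {1..n}}"
    proof
      fix xs assume xs: "xs \<in> permutations_of_set {1..n}"
      then have len: "length xs = n" using length_finite_permutations_of_set by fastforce
      have st: "set xs = {1..n}" "distinct xs" using xs by (auto simp: permutations_of_set_def)
      define \<sigma> where "\<sigma> j = (if j \<in> {1..n} then xs ! (j - 1) else j)" for j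
      have img: "\<sigma> ` {1..n} = {1..n}"
      proof -
        have "\<sigma> ` {1..n} = (\<lambda>j. xs ! (j - 1)) ` {1..n}" by (simp add: \<sigma>_def)
        also have "\<dots> = (\<lambda>j. xs ! j) ` {..<n}"
        proof -
          have "{1..n} = Suc ` {..<n}"
          proof (rule set_eqI)
            fix x show "x \<in> {1..n} \<longleftrightarrow> x \<in> Suc ` {..<n}" by (cases x) auto
          qed
          then show ?thesis by (simp add: image_image)
        qed
        also have "\<dots> = set xs" using len by (auto simp: in_set_conv_nth)
        finally show ?thesis using st by simp
      qed
      have inj: "inj_on \<sigma> {1..n}"
      proof (rule inj_onI)
        fix a b assume ab: "a \<in> {1..n}" "b \<in> {1..n}" "\<sigma> a = \<sigma> b"
        then have "xs ! (a - 1) = xs ! (b - 1)" by (simp add: \<sigma>_def)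
        moreover have "a - 1 < length xs" "b - 1 < length xs" using ab len by auto
        ultimately have "a - 1 = b - 1" using st(2) nth_eq_iff_index_eq by blast
        then show "a = b" using ab by auto
      qed
      have perm: "\<sigma> permutes {1..n}"
      proof (rule bij_imp_permutes)
        show "bij_betw \<sigma> {1..n} {1..n}" using inj img by (simp add: bij_betw_def)
      qed (auto simp add: \<sigma>_def)
      have "map \<sigma> [1..<Suc n] = xs"
        by (rule nth_equalityI) (auto simp: len \<sigma>_def nth_map_upt)
      then show "xs \<in> (\<lambda>\<sigma>. map \<sigma> [1..<Suc n]) ` {\<sigma>. \<sigma> permutes {1..n}}"
        using perm by blast
    qed
  qed
qed

lemma A_maj_list: "(A_maj n :: 'k::comm_ring_1 L) = (\<Sum>xs\<in>permutations_of_set {1..n}. LL xs)"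
proof -
  have "(A_maj n :: 'k L) = (\<Sum>\<sigma>\<in>{\<sigma>. \<sigma> permutes {1..n}}. LL (map \<sigma> [1..<Suc n]))"
    by (simp add: A_maj_def stats_list)
  also have "\<dots> = (\<Sum>xs\<in>permutations_of_set {1..n}. LL xs)"
    by (rule sum.reindex_bij_betw[OF perm_list_bij])
  finally show ?thesis .
qed



lemma perms_ins:
  "(\<Sum>ys\<in>permutations_of_set {1..Suc n}. (f ys :: 'a::comm_monoid_add))
   = (\<Sum>xs\<in>permutations_of_set {1..n}. \<Sum>i\<le>n. f (insL xs i (Suc n)))"
proof -
  let ?P = "permutations_of_set {1..n}"
  let ?h = "\<lambda>p. insL (fst p) (snd p) (Suc n)"
  have lenP: "length xs = n" if "xs \<in> ?P" for xs
    using that length_finite_permutations_of_set by fastforce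
  have NP: "Suc n \<notin> set xs" if "xs \<in> ?P" for xs
    using that by (auto simp: permutations_of_set_def)
  have tw: "takeWhile (\<lambda>x. x \<noteq> Suc n) (insL xs i (Suc n)) = take i xs" if "xs \<in> ?P" for xs i
  proof -
    have "\<forall>x\<in>set (take i xs). x \<noteq> Suc n" using NP[OF that] by (auto dest: in_set_takeD)
    then show ?thesis by (simp add: insL_def takeWhile_append2)
  qed
  have inj: "inj_on ?h (?P \<times> {..n})"
  proof (rule inj_onI)
    fix p q assume p: "p \<in> ?P \<times> {..n}" and q: "q \<in> ?P \<times> {..n}" and eq: "?h p = ?h q"
    obtain xs i where pp: "p = (xs, i)" by (cases p)
    obtain ys j where qq: "q = (ys, j)" by (cases q)
    have xs: "xs \<in> ?P" "i \<le> n" using p pp by auto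
    have ys: "ys \<in> ?P" "j \<le> n" using q qq by auto
    have e: "insL xs i (Suc n) = insL ys j (Suc n)" using eq pp qq by simp
    have t: "take i xs = take j ys" using tw[OF xs(1), of i] tw[OF ys(1), of j] e by simp
    then have ij: "i = j" using xs ys lenP[OF xs(1)] lenP[OF ys(1)]
      by (metis length_take min.absorb2)
    have "drop i xs = drop j ys" using e t by (simp add: insL_def)
    then have "xs = ys" using t by (metis append_take_drop_id)
    then show "p = q" using pp qq ij by simp
  qed
  have img: "?h ` (?P \<times> {..n}) = permutations_of_set {1..Suc n}"
  proof
    show "?h ` (?P \<times> {..n}) \<subseteq> permutations_of_set {1..Suc n}"
    proof (rule image_subsetI)
      fix p assume p: "p \<in> ?P \<times> {..n}"
      obtain xs i where pp: "p = (xs, i)" by (cases p)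
      have xs: "xs \<in> ?P" "i \<le> n" using p pp by auto
      have d: "distinct xs" "set xs = {1..n}" using xs by (auto simp: permutations_of_set_def)
      have "distinct (take i xs)" "distinct (drop i xs)" "set (take i xs) \<inter> set (drop i xs) = {}"
        using d(1) by (metis append_take_drop_id distinct_append)+
      then have "distinct (take i xs @ Suc n # drop i xs)"
        using NP[OF xs(1)] by (auto dest: in_set_takeD in_set_dropD)
      moreover have "set (insL xs i (Suc n)) = {1..Suc n}" using d by auto
      ultimately show "?h p \<in> permutations_of_set {1..Suc n}"
        by (simp add: permutations_of_set_def insL_def pp)
    qed
    show "permutations_of_set {1..Suc n} \<subseteq> ?h ` (?P \<times> {..n})"
    proof
      fix ys assume ys: "ys \<in> permutations_of_set {1..Suc n}"
      have d: "distinct ys" "set ys = {1..Suc n}" using ys by (auto simp: permutations_of_set_def)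
      then have "Suc n \<in> set ys" by simp
      then obtain as bs where ab: "ys = as @ Suc n # bs" by (meson split_list)
      have dd: "distinct (as @ Suc n # bs)" using d(1) ab by simp
      have "distinct (as @ bs)" "Suc n \<notin> set (as @ bs)" using dd by auto
      moreover have "set (as @ bs) = {1..n}"
      proof -
        have "set (as @ bs) = set ys - {Suc n}" using dd unfolding ab by auto
        also have "\<dots> = {1..Suc n} - {Suc n}" using d by simp
        also have "\<dots> = {1..n}" by auto
        finally show ?thesis .
      qed
      ultimately have P: "as @ bs \<in> ?P" by (simp add: permutations_of_set_def)
      then have "length as \<le> n" using lenP[OF P] by simp
      moreover have "ys = insL (as @ bs) (length as) (Suc n)" using ab by (simp add: insL_def)
      ultimately show "ys \<in> ?h ` (?P \<times> {..n})" using P by (auto intro!: image_eqI[where x="(as @ bs, length as)"])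
    qed
  qed
  have "(\<Sum>ys\<in>permutations_of_set {1..Suc n}. f ys) = (\<Sum>p\<in>?P \<times> {..n}. f (?h p))"
    using sum.reindex[OF inj, of f] img by simp
  also have "\<dots> = (\<Sum>xs\<in>?P. \<Sum>i\<le>n. f (insL xs i (Suc n)))"
    by (simp add: sum.cartesian_product split_beta)
  finally show ?thesis .
qed

definition Tk :: "int \<times> int \<times> int \<Rightarrow> 'k::comm_ring_1 L" where
  "Tk \<kappa> = (case \<kappa> of (e, a, b) \<Rightarrow> TkN e (nat a) (nat b))"

definition T :: "'k::comm_ring_1 L \<Rightarrow> 'k L" where
  "T f = (\<Sum>\<kappa>\<in>Poly_Mapping.keys f. Poly_Mapping.single 0 (Poly_Mapping.lookup f \<kappa>) * Tk \<kappa>)"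

lemma T_superset:
  assumes "finite S" "Poly_Mapping.keys f \<subseteq> S"
  shows "T f = (\<Sum>\<kappa>\<in>S. Poly_Mapping.single 0 (Poly_Mapping.lookup f \<kappa>) * Tk \<kappa>)"
  unfolding T_def
  by (rule sum.mono_neutral_left) (use assms in \<open>auto simp: in_keys_iff\<close>)

lemma T_add: "T (f + g) = T f + T g"
proof -
  let ?S = "Poly_Mapping.keys f \<union> Poly_Mapping.keys g"
  have "T (f + g) = (\<Sum>\<kappa>\<in>?S. Poly_Mapping.single 0 (Poly_Mapping.lookup (f + g) \<kappa>) * Tk \<kappa>)"
    using keys_add[of f g] by (intro T_superset) auto
  also have "\<dots> = (\<Sum>\<kappa>\<in>?S. Poly_Mapping.single 0 (Poly_Mapping.lookup f \<kappa>) * Tk \<kappa>)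
                + (\<Sum>\<kappa>\<in>?S. Poly_Mapping.single 0 (Poly_Mapping.lookup g \<kappa>) * Tk \<kappa>)"
    by (simp add: lookup_add single_add distrib_right sum.distrib)
  also have "\<dots> = T f + T g"
    by (subst (1 2) T_superset[of ?S]) auto
  finally show ?thesis .
qed

lemma T_zero [simp]: "T 0 = 0"
  by (simp add: T_def)

lemma T_sum: "T (\<Sum>i\<in>I. g i) = (\<Sum>i\<in>I. T (g i))"
  by (induction I rule: infinite_finite_induct) (auto simp: T_add)

lemma T_single: "T (Poly_Mapping.single \<kappa> c) = Poly_Mapping.single 0 c * Tk \<kappa>"
  by (cases "c = 0") (simp_all add: T_def)

lemma T_lmono: "T (lmono a b c) = Tk (a, b, c)"
  by (simp add: lmono_def T_single)

lemma A_rec: "(A_maj (Suc n) :: 'k::comm_ring_1 L) = T (A_maj n)"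
proof -
  have "(A_maj (Suc n) :: 'k L) = (\<Sum>ys\<in>permutations_of_set {1..Suc n}. LL ys)"
    by (rule A_maj_list)
  also have "\<dots> = (\<Sum>xs\<in>permutations_of_set {1..n}. \<Sum>i\<le>n. LL (insL xs i (Suc n)))"
    by (rule perms_ins)
  also have "\<dots> = (\<Sum>xs\<in>permutations_of_set {1..n}. T (LL xs))"
  proof (rule sum.cong[OF refl])
    fix xs assume xs: "xs \<in> permutations_of_set {1..n}"
    then have len: "length xs = n" using length_finite_permutations_of_set by fastforce
    have pos: "\<forall>x\<in>set xs. 0 < x \<and> x < Suc n" using xs by (auto simp: permutations_of_set_def)
    have "(\<Sum>i\<le>n. (LL (insL xs i (Suc n)) :: 'k L)) = TkN (int (majL xs)) (ascL xs) (card (Dl xs))"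
      using slot_sum[OF pos] len by simp
    also have "\<dots> = T (LL xs)" by (simp add: LL_def T_lmono Tk_def)
    finally show "(\<Sum>i\<le>n. (LL (insL xs i (Suc n)) :: 'k L)) = T (LL xs)" .
  qed
  also have "\<dots> = T (A_maj n)" by (simp add: T_sum A_maj_list)
  finally show ?thesis .
qed

lemma A_zero: "(A_maj 0 :: 'k::comm_ring_1 L) = lmono 0 1 0"
  by (simp add: A_maj_list LL_def majL_def ascL_def Dl_def pv_def)



definition pos :: "word \<Rightarrow> bool" where
  "pos w \<longleftrightarrow> (\<forall>l\<in>set w. snd (snd l))"

lemma pos_simps [simp]:
  "pos []" "pos (l # w) \<longleftrightarrow> snd (snd l) \<and> pos w" "pos (u @ v) \<longleftrightarrow> pos u \<and> pos v"
  by (auto simp: pos_def)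

lemma fred_Cons: "fred (a # w) = red_push a (fred w)"
  by (simp add: fred_def)

lemma fred_pos: "pos w \<Longrightarrow> fred w = w"
proof (induction w)
  case Nil
  then show ?case by (simp add: fred_def)
next
  case (Cons a w)
  then show ?case
    by (cases w) (auto simp: fred_Cons inverse_letters_def)
qed

lemma emon_pos: "pos w \<Longrightarrow> emon w = Poly_Mapping.single w 1"
  by (simp add: emon_def fred_pos)

lemma escale_single: "escale c (Poly_Mapping.single v d) = Poly_Mapping.single v (c * d)"
  by (simp add: escale_def)

lemma lookup_escale: "Poly_Mapping.lookup (escale c g) w = c * Poly_Mapping.lookup g w"
  by (simp add: escale_def map.rep_eq when_def)

lemma keys_escale: "Poly_Mapping.keys (escale c g) \<subseteq> Poly_Mapping.keys g"
  by (auto simp: in_keys_iff lookup_escale)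

lemma escale_zero [simp]: "escale 0 g = 0"
  by (rule poly_mapping_eqI) (simp add: lookup_escale)

lemma elin_single: "elin F (Poly_Mapping.single u c) = escale c (F u)"
  by (cases "c = 0") (simp_all add: elin_def)

lemma emul_single:
  "emul (Poly_Mapping.single u a) (Poly_Mapping.single v b) = Poly_Mapping.single (fred (u @ v)) (a * b)"
  by (cases "a = 0"; cases "b = 0") (simp_all add: emul_def)

lemma pos_up_word [simp]: "pos (up_word u) = pos u"
  by (auto simp: pos_def up_word_def)

lemma up_single: "pos u \<Longrightarrow> up (Poly_Mapping.single u c) = Poly_Mapping.single (up_word u) c"
  by (simp add: up_def elin_single emon_pos escale_single)

lemma pos_LPO [simp]: "pos (LPO u) = pos u"
  by (simp add: pos_def LPO_def)

lemma order_single: "pos u \<Longrightarrow> order_ext LPO (Poly_Mapping.single u c) = Poly_Mapping.single (LPO u) c"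
  by (simp add: order_ext_def elin_single emon_pos escale_single)

abbreviation xy0 :: word where "xy0 \<equiv> [(X, 0, True), (Y, 0, True)]"

lemma R_maj_eq: "R_maj s i = Poly_Mapping.single xy0 (monom 1 i)"
  by (simp add: R_maj_def fred_pos)

lemma qder_pos:
  assumes "pos w"
  shows "(qder_word R_maj LPO w :: 'k::comm_ring_1 E) =
    (\<Sum>j<length w. Poly_Mapping.single (LPO (take j w @ xy0 @ up_word (drop (Suc j) w))) (monom 1 (fst (snd (w ! j)))))"
  unfolding qder_word_def
proof (rule sum.cong[OF refl])
  fix j assume j: "j \<in> {..<length w}"
  obtain s i b where wj: "w ! j = (s, i, b)" by (cases "w ! j")
  have b: "b" using assms j wj by (metis lessThan_iff nth_mem pos_def snd_conv)
  have pt: "pos (take j w)" "pos (drop (Suc j) w)" using assms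
    by (auto simp: pos_def dest: in_set_takeD in_set_dropD)
  show "order_ext LPO (emul (emul (emon (take j w)) (rule_letter R_maj (w ! j))) (up (emon (drop (Suc j) w))))
      = (Poly_Mapping.single (LPO (take j w @ xy0 @ up_word (drop (Suc j) w))) (monom 1 (fst (snd (w ! j)))) :: 'k E)"
    using pt b
    by (simp add: wj rule_letter_def R_maj_eq emon_pos emul_single up_single fred_pos order_single)
qed


lemma qemb_superset:
  assumes "degree p \<le> N"
  shows "(qemb p :: 'k::comm_ring_1 L) = (\<Sum>i\<le>N. Poly_Mapping.single (int i, 0, 0) (coeff p i))"
  unfolding qemb_def
  by (rule sum.mono_neutral_left) (use assms in \<open>auto simp: coeff_eq_0\<close>)

lemma qemb_0 [simp]: "qemb 0 = 0"
  by (simp add: qemb_def)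

lemma qemb_add: "qemb (p + q) = qemb p + qemb q"
proof -
  let ?N = "max (degree p) (degree q)"
  have "degree (p + q) \<le> ?N" by (rule degree_add_le) auto
  then show ?thesis
    by (simp add: qemb_superset[of _ ?N] single_add sum.distrib)
qed

lemma qemb_sum: "qemb (\<Sum>i\<in>I. g i) = (\<Sum>i\<in>I. qemb (g i))"
  by (induction I rule: infinite_finite_induct) (auto simp: qemb_add)

lemma qemb_monom: "qemb (monom c k) = Poly_Mapping.single (int k, 0, 0) c"
proof -
  have "qemb (monom c k) = (\<Sum>i\<le>k. Poly_Mapping.single (int i, 0, 0) (coeff (monom c k) i))"
    by (rule qemb_superset) (simp add: degree_monom_le)
  also have "\<dots> = Poly_Mapping.single (int k, 0, 0) c"
    by (subst sum.cong[OF refl, of _ _ "\<lambda>i. if i = k then Poly_Mapping.single (int k, 0, 0) c else 0"])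
       (auto simp: coeff_monom)
  finally show ?thesis .
qed

lemma qemb_mult: "qemb (p * q) = qemb p * qemb q"
proof -
  have "p * q = (\<Sum>i\<le>degree p. monom (coeff p i) i) * (\<Sum>j\<le>degree q. monom (coeff q j) j)"
    by (simp add: poly_as_sum_of_monoms)
  also have "\<dots> = (\<Sum>i\<le>degree p. \<Sum>j\<le>degree q. monom (coeff p i * coeff q j) (i + j))"
    by (simp add: sum_distrib_left sum_distrib_right mult_monom) (rule sum.swap)
  finally have pq: "p * q = \<dots>" .
  have "qemb (p * q) = (\<Sum>i\<le>degree p. \<Sum>j\<le>degree q. Poly_Mapping.single (int (i + j), 0, 0) (coeff p i * coeff q j))"
    by (simp add: pq qemb_sum qemb_monom)
  also have "\<dots> = (\<Sum>i\<le>degree p. Poly_Mapping.single (int i, 0, 0) (coeff p i)) *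
                  (\<Sum>j\<le>degree q. Poly_Mapping.single (int j, 0, 0) (coeff q j))"
    by (simp add: sum_distrib_left sum_distrib_right mult_single) (rule sum.swap)
  finally show ?thesis by (simp add: qemb_def)
qed

lemma qemb_1 [simp]: "qemb 1 = 1"
  using qemb_monom[of 1 0] by (simp add: zero_prod_def flip: monom_eq_1 single_one)

lemma phi_superset:
  assumes "finite S" "Poly_Mapping.keys f \<subseteq> S"
  shows "phi f = (\<Sum>w\<in>S. qemb (Poly_Mapping.lookup f w) * phi_word w)"
  unfolding phi_def
  by (rule sum.mono_neutral_left) (use assms in \<open>auto simp: in_keys_iff\<close>)

lemma phi_add: "phi (f + g) = phi f + phi g"
proof -
  let ?S = "Poly_Mapping.keys f \<union> Poly_Mapping.keys g"
  have "phi (f + g) = (\<Sum>w\<in>?S. qemb (Poly_Mapping.lookup (f + g) w) * phi_word w)"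
    using keys_add[of f g] by (intro phi_superset) auto
  also have "\<dots> = (\<Sum>w\<in>?S. qemb (Poly_Mapping.lookup f w) * phi_word w)
                + (\<Sum>w\<in>?S. qemb (Poly_Mapping.lookup g w) * phi_word w)"
    by (simp add: lookup_add qemb_add distrib_right sum.distrib)
  also have "\<dots> = phi f + phi g"
    by (subst (1 2) phi_superset[of ?S]) auto
  finally show ?thesis .
qed

lemma phi_zero [simp]: "phi 0 = 0"
  by (simp add: phi_def)

lemma phi_sum: "phi (\<Sum>i\<in>I. g i) = (\<Sum>i\<in>I. phi (g i))"
  by (induction I rule: infinite_finite_induct) (auto simp: phi_add)

lemma phi_single: "phi (Poly_Mapping.single w c) = qemb c * phi_word w"
  by (cases "c = 0") (simp_all add: phi_def)

lemma phi_escale: "phi (escale c g) = qemb c * phi g"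
proof -
  have "phi (escale c g) = (\<Sum>w\<in>Poly_Mapping.keys g. qemb (Poly_Mapping.lookup (escale c g) w) * phi_word w)"
    using keys_escale by (intro phi_superset) auto
  also have "\<dots> = qemb c * phi g"
    by (simp add: lookup_escale qemb_mult phi_def sum_distrib_left mult.assoc)
  finally show ?thesis .
qed


lemma phi_word_Nil [simp]: "phi_word [] = 1"
  by (simp add: phi_word_def)

lemma phi_word_Cons [simp]: "phi_word (l # w) = phi_letter l * phi_word w"
  by (simp add: phi_word_def)

lemma phi_word_append: "phi_word (u @ v) = phi_word u * phi_word v"
  by (simp add: phi_word_def)

lemma phi_word_mset: "mset u = mset v \<Longrightarrow> phi_word u = phi_word v"
  unfolding phi_word_def by (metis mset_map prod_mset_prod_list)

lemma phi_word_LPO: "phi_word (LPO u) = phi_word u"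
  by (rule phi_word_mset) (simp add: LPO_def)

definition wst :: "word \<Rightarrow> int \<times> int \<times> int" where
  "wst u = (int (sum_list (map (\<lambda>l. fst (snd l)) u)),
            int (length (filter (\<lambda>l. fst l = X) u)), int (length (filter (\<lambda>l. fst l = Y) u)))"

lemma lmono_one: "lmono 0 0 0 = 1"
  by (simp add: lmono_def zero_prod_def flip: single_one)

lemma phi_word_pos: "pos u \<Longrightarrow> phi_word u = (Poly_Mapping.single (wst u) 1 :: 'k::comm_ring_1 L)"
proof (induction u)
  case Nil
  then show ?case by (simp add: wst_def zero_prod_def flip: single_one)
next
  case (Cons l u)
  obtain s i b where l: "l = (s, i, b)" by (cases l)
  have b using Cons.prems l by simp
  then show ?case using Cons
    by (cases s) (simp_all add: l wst_def phi_letter_def lmono_def mult_single)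
qed

lemma phi_word_up: "pos u \<Longrightarrow> phi_word (up_word u) = (lmono (int (length u)) 0 0 * phi_word u :: 'k::comm_ring_1 L)"
proof (induction u)
  case Nil
  then show ?case by (simp add: up_word_def lmono_one)
next
  case (Cons l u)
  obtain s i b where l: "l = (s, i, b)" by (cases l)
  have b using Cons.prems l by simp
  then have pl: "phi_letter (s, Suc i, b) = (lmono 1 0 0 * phi_letter l :: 'k L)"
    by (cases s) (simp_all add: l phi_letter_def lmono_mult)
  have "(phi_word (up_word (l # u)) :: 'k L) = phi_letter (s, Suc i, b) * phi_word (up_word u)"
    by (simp add: l up_word_def)
  also have "\<dots> = (lmono 1 0 0 * phi_letter l) * (lmono (int (length u)) 0 0 * phi_word u)"
  proof -
    have ih: "phi_word (up_word u) = (lmono (int (length u)) 0 0 * phi_word u :: 'k L)" using Cons by simp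
    show ?thesis by (subst pl, subst ih, rule refl)
  qed
  also have "\<dots> = (lmono 1 0 0 * lmono (int (length u)) 0 0) * (phi_letter l * phi_word u)"
    by (simp only: mult_ac)
  also have "\<dots> = lmono (int (length (l # u))) 0 0 * phi_word (l # u)"
    by (simp add: lmono_mult)
  finally show ?case .
qed

definition Phi :: "word \<Rightarrow> 'k::comm_ring_1 L" where
  "Phi w = (\<Sum>j<length w. phi_word (take j w) * lmono (int (fst (snd (w ! j)))) 1 1
              * lmono (int (length w - Suc j)) 0 0 * phi_word (drop (Suc j) w))"

lemma phi_qder:
  assumes "pos w"
  shows "phi (qder_word R_maj LPO w :: 'k::comm_ring_1 E) = Phi w"
proof -
  have "phi (qder_word R_maj LPO w :: 'k E) =
    (\<Sum>j<length w. qemb (monom 1 (fst (snd (w ! j)))) * phi_word (LPO (take j w @ xy0 @ up_word (drop (Suc j) w))))"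
    by (simp add: qder_pos[OF assms] phi_sum phi_single)
  also have "\<dots> = Phi w"
    unfolding Phi_def
  proof (rule sum.cong[OF refl])
    fix j assume j: "j \<in> {..<length w}"
    have pd: "pos (drop (Suc j) w)" using assms by (auto simp: pos_def dest: in_set_dropD)
    have xy: "phi_word xy0 = (lmono 0 1 1 :: 'k L)"
      by (simp add: phi_letter_def lmono_mult)
    show "qemb (monom 1 (fst (snd (w ! j)))) * phi_word (LPO (take j w @ xy0 @ up_word (drop (Suc j) w))) =
       (phi_word (take j w) * lmono (int (fst (snd (w ! j)))) 1 1 * lmono (int (length w - Suc j)) 0 0 *
       phi_word (drop (Suc j) w) :: 'k L)"
      using j
      by (simp add: phi_word_LPO phi_word_append xy phi_word_up[OF pd] qemb_monom)
         (simp add: lmono_def mult_single mult_ac phi_letter_def)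
  qed
  finally show ?thesis .
qed

lemma Phi_Cons:
  "(Phi (l # w) :: 'k::comm_ring_1 L) = lmono (int (fst (snd l))) 1 1 * lmono (int (length w)) 0 0 * phi_word w
     + phi_letter l * Phi w"
  unfolding Phi_def length_Cons sum.lessThan_Suc_shift
  by (simp add: sum_distrib_left mult_ac del: sum.lessThan_Suc)

lemma TkN_X:
  "(TkN (E + int i) (Suc a) b :: 'k::comm_ring_1 L) =
     lmono (int i) 1 1 * lmono (int (a + b)) 0 0 * lmono E (int a) (int b) + lmono (int i) 1 0 * TkN E a b"
  by (simp add: TkN_def sum_distrib_left lmono_mult algebra_simps)

lemma TkN_Y:
  "(TkN (E + int i) 0 (Suc b) :: 'k::comm_ring_1 L) =
     lmono (int i) 1 1 * lmono (int b) 0 0 * lmono E 0 (int b) + lmono (int i) 0 1 * TkN E 0 b"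
  by (simp add: TkN_def sum_distrib_left lmono_mult algebra_simps)


definition good :: "word \<Rightarrow> bool" where
  "good w \<longleftrightarrow> pos w \<and> sorted (map lpo_key w)"

lemma notX_iff: "(a \<noteq> X) = (a = Y)"
  by (cases a) auto

lemma length_XY: "length (filter (\<lambda>l. fst l = X) w) + length (filter (\<lambda>l. fst l = Y) w) = length w"
proof (induction w)
  case (Cons a w) then show ?case by (cases "fst a") auto
qed simp

lemma nat_1_int [simp]: "nat (1 + int a) = Suc a"
  by arith

lemma Phi_good: "good w \<Longrightarrow> (Phi w :: 'k::comm_ring_1 L) = Tk (wst w)"
proof (induction w)
  case Nil
  then show ?case by (simp add: Phi_def Tk_def wst_def TkN_def)
next
  case (Cons l w)
  obtain s i b where l: "l = (s, i, b)" by (cases l)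
  have b: b and gw: "good w" and srt: "\<forall>l'\<in>set w. lpo_key l \<le> lpo_key l'"
    using Cons.prems l by (auto simp: good_def)
  have pw: "pos w" using gw by (simp add: good_def)
  define E where "E = int (sum_list (map (\<lambda>l. fst (snd l)) w))"
  define a where "a = length (filter (\<lambda>l. fst l = X) w)"
  define c where "c = length (filter (\<lambda>l. fst l = Y) w)"
  have wst: "wst w = (E, int a, int c)" by (simp add: wst_def E_def a_def c_def)
  have len: "length w = a + c" using length_XY[of w] by (simp add: a_def c_def)
  have IH: "(Phi w :: 'k L) = TkN E a c" using Cons.IH gw by (simp add: wst Tk_def)
  have pww: "(phi_word w :: 'k L) = lmono E (int a) (int c)" using phi_word_pos[OF pw] by (simp add: wst lmono_def)
  show ?case
  proof (cases s)
    case X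
    have "wst (l # w) = (E + int i, int (Suc a), int c)"
      by (simp add: l X wst_def E_def a_def c_def)
    then have "(Tk (wst (l # w)) :: 'k L) = TkN (E + int i) (Suc a) c" by (simp add: Tk_def)
    also have "\<dots> = Phi (l # w)"
      by (simp add: TkN_X Phi_Cons IH pww len l X b phi_letter_def)
    finally show ?thesis ..
  next
    case Y
    have a0: "a = 0"
    proof -
      have "\<forall>l'\<in>set w. fst l' = Y"
      proof
        fix l' assume "l' \<in> set w"
        then have "lpo_key l \<le> lpo_key l'" using srt by blast
        then show "fst l' = Y" using Y l
          by (cases l') (auto simp: lpo_key_def notX_iff split: if_splits)
      qed
      then show ?thesis by (auto simp: a_def filter_empty_conv)
    qed
    have "wst (l # w) = (E + int i, 0, int (Suc c))"
      by (simp add: l Y wst_def E_def a_def c_def a0[unfolded a_def])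
    then have "(Tk (wst (l # w)) :: 'k L) = TkN (E + int i) 0 (Suc c)" by (simp add: Tk_def)
    also have "\<dots> = Phi (l # w)"
      by (simp add: TkN_Y Phi_Cons IH pww len l Y b phi_letter_def a0)
    finally show ?thesis ..
  qed
qed

lemma TkN_shift: "(TkN (x + e) a b :: 'k::comm_ring_1 L) = lmono x 0 0 * TkN e a b"
  by (simp add: TkN_def sum_distrib_left lmono_mult algebra_simps)

lemma T_qemb: "T (qemb c * Poly_Mapping.single \<kappa> 1) = qemb c * (Tk \<kappa> :: 'k::comm_ring_1 L)"
proof -
  obtain e a b where k: "\<kappa> = (e, a, b)" by (cases \<kappa>)
  have "qemb c * Poly_Mapping.single \<kappa> 1 =
        (\<Sum>i\<le>degree c. Poly_Mapping.single ((int i, 0, 0) + \<kappa>) (coeff c i))"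
    by (simp add: qemb_def sum_distrib_right mult_single)
  then have "T (qemb c * Poly_Mapping.single \<kappa> 1) =
     (\<Sum>i\<le>degree c. Poly_Mapping.single 0 (coeff c i) * Tk ((int i, 0, 0) + \<kappa>))"
    by (simp add: T_sum T_single)
  also have "\<dots> = (\<Sum>i\<le>degree c. Poly_Mapping.single (int i, 0, 0) (coeff c i) * Tk \<kappa>)"
  proof (rule sum.cong[OF refl])
    fix i
    have "(Tk ((int i, 0, 0) + \<kappa>) :: 'k L) = lmono (int i) 0 0 * Tk \<kappa>"
      by (simp add: k Tk_def TkN_shift)
    then show "Poly_Mapping.single 0 (coeff c i) * Tk ((int i, 0, 0) + \<kappa>) =
               Poly_Mapping.single (int i, 0, 0) (coeff c i) * (Tk \<kappa> :: 'k L)"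
      by (simp add: lmono_def mult_single mult.assoc[symmetric])
  qed
  also have "\<dots> = qemb c * Tk \<kappa>"
    by (simp add: qemb_def sum_distrib_right)
  finally show ?thesis .
qed


lemma keys_sum': "Poly_Mapping.keys (\<Sum>i\<in>I. g i) \<subseteq> (\<Union>i\<in>I. Poly_Mapping.keys (g i))"
proof (induction I rule: infinite_finite_induct)
  case (insert x F)
  then show ?case using keys_add[of "g x" "\<Sum>i\<in>F. g i"] by auto
qed auto

lemma D_maj_eq: "(D_maj f :: 'k::comm_ring_1 E) =
  (\<Sum>w\<in>Poly_Mapping.keys f. escale (Poly_Mapping.lookup f w) (qder_word R_maj LPO w))"
  by (simp add: D_maj_def qder_def elin_def)

lemma good_LPO: "pos u \<Longrightarrow> good (LPO u)"
  by (simp add: good_def) (simp add: LPO_def)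

lemma D_keys:
  assumes "\<forall>w\<in>Poly_Mapping.keys f. good w"
  shows "\<forall>w\<in>Poly_Mapping.keys (D_maj f :: 'k::comm_ring_1 E). good w"
proof
  fix v assume v: "v \<in> Poly_Mapping.keys (D_maj f :: 'k E)"
  have "v \<in> (\<Union>w\<in>Poly_Mapping.keys f. Poly_Mapping.keys (escale (Poly_Mapping.lookup f w) (qder_word R_maj LPO w :: 'k E)))"
    using v unfolding D_maj_eq by (rule subsetD[OF keys_sum'])
  then obtain w where w: "w \<in> Poly_Mapping.keys f"
    and vw: "v \<in> Poly_Mapping.keys (escale (Poly_Mapping.lookup f w) (qder_word R_maj LPO w :: 'k E))"
    by (rule UN_E)
  have pw: "pos w" using assms w by (simp add: good_def)
  have "v \<in> Poly_Mapping.keys (qder_word R_maj LPO w :: 'k E)" by (rule subsetD[OF keys_escale vw])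
  then have "v \<in> (\<Union>j\<in>{..<length w}. Poly_Mapping.keys (Poly_Mapping.single (LPO (take j w @ xy0 @ up_word (drop (Suc j) w))) (monom 1 (fst (snd (w ! j)))) :: 'k E))"
    unfolding qder_pos[OF pw] by (rule subsetD[OF keys_sum'])
  then obtain j where j: "j < length w"
    and vj: "v \<in> Poly_Mapping.keys (Poly_Mapping.single (LPO (take j w @ xy0 @ up_word (drop (Suc j) w))) (monom 1 (fst (snd (w ! j)))) :: 'k E)"
    by blast
  from vj have "v = LPO (take j w @ xy0 @ up_word (drop (Suc j) w))"
    by (simp only: keys_single split: if_splits) auto
  moreover have "pos (take j w @ xy0 @ up_word (drop (Suc j) w))"
  proof -
    have "pos (take j w)" "pos (drop (Suc j) w)" using pw by (auto simp: pos_def dest: in_set_takeD in_set_dropD)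
    then show ?thesis by simp
  qed
  ultimately show "good v" by (simp add: good_LPO)
qed

lemma D_phi:
  assumes "\<forall>w\<in>Poly_Mapping.keys f. good w"
  shows "phi (D_maj f :: 'k::comm_ring_1 E) = T (phi f)"
proof -
  have "phi (D_maj f :: 'k E) = (\<Sum>w\<in>Poly_Mapping.keys f. qemb (Poly_Mapping.lookup f w) * Tk (wst w))"
    unfolding D_maj_eq phi_sum phi_escale
  proof (rule sum.cong[OF refl])
    fix w assume "w \<in> Poly_Mapping.keys f"
    then have g: "good w" using assms by blast
    then have "pos w" by (simp add: good_def)
    then show "qemb (Poly_Mapping.lookup f w) * phi (qder_word R_maj LPO w :: 'k E)
            = qemb (Poly_Mapping.lookup f w) * Tk (wst w)"
      by (simp add: phi_qder Phi_good[OF g])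
  qed
  also have "\<dots> = T (phi f)"
    unfolding phi_def T_sum
  proof (rule sum.cong[OF refl])
    fix w assume "w \<in> Poly_Mapping.keys f"
    then have "pos w" using assms by (simp add: good_def)
    then show "qemb (Poly_Mapping.lookup f w) * Tk (wst w) = T (qemb (Poly_Mapping.lookup f w) * (phi_word w :: 'k L))"
      by (simp add: phi_word_pos T_qemb)
  qed
  finally show ?thesis .
qed

lemma main_ind:
  "(\<forall>w\<in>Poly_Mapping.keys ((D_maj ^^ n) (emon [(X, 0, True)]) :: 'k::comm_ring_1 E). good w)
   \<and> phi ((D_maj ^^ n) (emon [(X, 0, True)]) :: 'k E) = A_maj n"
proof (induction n)
  case 0
  have e: "(emon [(X, 0, True)] :: 'k E) = Poly_Mapping.single [(X, 0, True)] 1" by (simp add: emon_pos)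
  have k: "Poly_Mapping.keys (emon [(X, 0, True)] :: 'k E) = {[(X, 0, True)]}" by (simp add: e)
  have g: "good [(X, 0, True)]" by (simp add: good_def)
  have "phi (emon [(X, 0, True)] :: 'k E) = lmono 0 1 0"
    by (simp add: e phi_single phi_letter_def)
  then show ?case using k g by (simp add: A_zero)
next
  case (Suc n)
  then have h: "\<forall>w\<in>Poly_Mapping.keys ((D_maj ^^ n) (emon [(X, 0, True)]) :: 'k E). good w"
    and p: "phi ((D_maj ^^ n) (emon [(X, 0, True)]) :: 'k E) = A_maj n" by blast+
  show ?case using D_keys[OF h] D_phi[OF h] p by (simp add: A_rec)
qed

theorem theorem5p3:
  fixes n :: nat
  assumes "n \<ge> 1"
  shows "phi ((D_maj ^^ n) (emon [(X, 0, True)]) :: ('k::{comm_ring_1, ring_char_0}) E)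
         = (A_maj n :: 'k L)"
  by (rule conjunct2[OF main_ind])


end
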